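(* Let $R\in\mathbb R$ and let $f:[0,R)\to\mathbb R$ be continuously differentiable and satisfy (h1) $f(0)>0$, $f'(0)=-1$; (h2) $f'$ is strictly increasing and convex; (h3) $f(t)<0$ for some $t\in(0,R)$. Let $t_*:=\min f^{-1}(\{0\})$, $\bar\tau:=\sup\{t\in[0,R):f(t)<0\}$, $\bar t:=\sup\{t\in[0,R):f'(t)<0\}$, and \[\kappa:=\sup_{0<t<R}\frac{-f(t)}{t},\qquad \lambda:=\sup\{t\in[0,R):\kappa+f'(t)<0\},\qquad\Theta:=\frac{\kappa}{2-\kappa}.\] Then $0<\kappa<1$, $0<\Theta<1$, $t_*<\lambda\le\bar t\le\bar\tau$, $f'(t)+\kappa<0$ for all $t\in[0,\lambda)$, and \[\inf_{0\le t<R}\big(f(t)+\kappa t\big)=\lim_{t\to\lambda^-}\big(f(t)+\kappa t\big)=0.\] *)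

theory Defs
  imports "HOL-Analysis.Analysis"
begin

end

theory Submission imports Defs begin
lemma fcont:
  assumes "\<And>t. t \<in> {0..<R} \<Longrightarrow> (f has_real_derivative f' t) (at t within {0..<R})"
  shows "continuous_on {0..<(R::real)} f"
proof (rule continuous_on_eq_continuous_within[THEN iffD2], intro ballI)
  fix t assume "t \<in> {0..<R}"
  from assms[OF this] show "continuous (at t within {0..<R}) f" by (rule DERIV_continuous)
qed

lemma fderiv_int:
  assumes "\<And>t. t \<in> {0..<R} \<Longrightarrow> (f has_real_derivative f' t) (at t within {0..<R})"
    and "0 < t" "t < (R::real)"
  shows "(f has_real_derivative f' t) (at t)"
proof -
  have d: "(f has_real_derivative f' t) (at t within {0..<R})" using assms by auto
  have "at t within {0..<R} = at t" by (rule at_within_interior) (simp add: assms(2,3))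
  with d show ?thesis by simp
qed

lemma mvt_within:
  assumes d: "\<And>t. t \<in> {0..<R} \<Longrightarrow> (f has_real_derivative f' t) (at t within {0..<R})"
    and "0 \<le> a" "a < b" "b < (R::real)"
  shows "\<exists>z. a<z \<and> z<b \<and> f b - f a = (b-a) * f' z"
proof -
  have c: "continuous_on {a..b} f"
  proof (rule continuous_on_subset)
    show "continuous_on {0..<R} f" by (rule fcont, rule d)
  qed (use assms in auto)
  have "f differentiable (at x)" if x: "a<x" "x<b" for x
  proof -
    have "0<x" "x<R" using assms x by auto
    hence "(f has_real_derivative f' x) (at x)" using d by (intro fderiv_int[where R=R]) auto
    thus ?thesis unfolding real_differentiable_def by (rule exI)
  qed
  from MVT[OF assms(3) c this] obtain l z where z: "a<z" "z<b" "DERIV f z :> l" "f b - f a = (b-a)*l" by blast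
  have "0 < z" "z < R" using z assms by auto
  hence "DERIV f z :> f' z" using d by (intro fderiv_int[where R=R]) auto
  with z(3) have "l = f' z" by (rule DERIV_unique)
  with z show ?thesis by auto
qed
theorem proposition2p4:
  fixes f f' :: "real \<Rightarrow> real" and R :: real
    and tstar taubar tbar \<kappa> lam \<Theta> :: real
  assumes deriv: "\<And>t. t \<in> {0..<R} \<Longrightarrow> (f has_real_derivative f' t) (at t within {0..<R})"
    and cont: "continuous_on {0..<R} f'"
    and h1a: "f 0 > 0" and h1b: "f' 0 = -1"
    and h2a: "strict_mono_on {0..<R} f'" and h2b: "convex_on {0..<R} f'"
    and h3: "\<exists>t\<in>{0<..<R}. f t < 0"
    and tstar_def: "tstar = Inf {t \<in> {0..<R}. f t = 0}"
    and taubar_def: "taubar = Sup {t \<in> {0..<R}. f t < 0}"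
    and tbar_def: "tbar = Sup {t \<in> {0..<R}. f' t < 0}"
    and kappa_def: "\<kappa> = Sup ((\<lambda>t. - f t / t) ` {0<..<R})"
    and lam_def: "lam = Sup {t \<in> {0..<R}. \<kappa> + f' t < 0}"
    and Theta_def: "\<Theta> = \<kappa> / (2 - \<kappa>)"
  shows "0 < \<kappa> \<and> \<kappa> < 1 \<and> 0 < \<Theta> \<and> \<Theta> < 1
    \<and> tstar < lam \<and> lam \<le> tbar \<and> tbar \<le> taubar
    \<and> (\<forall>t\<in>{0..<lam}. f' t + \<kappa> < 0)
    \<and> Inf ((\<lambda>t. f t + \<kappa> * t) ` {0..<R}) = 0
    \<and> ((\<lambda>t. f t + \<kappa> * t) \<longlongrightarrow> 0) (at_left lam)"
proof -
  define g where "g t = f t + \<kappa> * t" for t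
  define S where "S = {t \<in> {0..<R}. \<kappa> + f' t < 0}"
  have mvt: "\<And>a b. 0 \<le> a \<Longrightarrow> a < b \<Longrightarrow> b < R \<Longrightarrow> \<exists>z. a<z \<and> z<b \<and> f b - f a = (b-a) * f' z"
    by (rule mvt_within, rule deriv)
  have mono: "\<And>a b. a \<in> {0..<R} \<Longrightarrow> b \<in> {0..<R} \<Longrightarrow> a < b \<Longrightarrow> f' a < f' b"
    using h2a unfolding strict_mono_on_def by blast
  have fc: "continuous_on {0..<R} f" by (rule fcont, rule deriv)
  obtain s where s: "s \<in> {0<..<R}" "f s < 0" using h3 by blast
  have R0: "R > 0" using s by auto
  have lowb: "f t > f 0 - t" if tt: "0 < t" "t < R" for t
  proof -
    obtain z where z: "0<z" "z<t" "f t - f 0 = (t-0) * f' z" using mvt[of 0 t] tt by auto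
    have "f' z > -1" using mono[of 0 z] z tt h1b by auto
    hence "(t-0) * f' z > (t - 0) * (-1)" using tt by (intro mult_strict_left_mono) auto
    thus ?thesis using z by simp
  qed
  have qb: "- f t / t \<le> 1 - f 0 / R" if hyp: "t \<in> {0<..<R}" for t
  proof -
    have t: "0 < t" "t < R" using hyp by auto
    have "- f t \<le> t - f 0" using lowb[OF t] by linarith
    hence "- f t / t \<le> (t - f 0) / t" using t(1) by (intro divide_right_mono) simp_all
    also have "\<dots> = 1 - f 0 / t" using t(1) by (simp add: diff_divide_distrib)
    also have "f 0 / R \<le> f 0 / t" using t h1a by (intro divide_left_mono) simp_all
    hence "1 - f 0 / t \<le> 1 - f 0 / R" by linarith
    finally show ?thesis .
  qed
  have bddk: "bdd_above ((\<lambda>t. - f t / t) ` {0<..<R})"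
    using qb by (intro bdd_aboveI[of _ "1 - f 0 / R"]) auto
  have kup: "- f t / t \<le> \<kappa>" if hyp: "t \<in> {0<..<R}" for t
    unfolding kappa_def using bddk hyp by (intro cSup_upper) auto
  have k0: "\<kappa> > 0"
  proof -
    have "- f s / s > 0" using s by (intro divide_pos_pos) auto
    thus ?thesis using kup[OF s(1)] by linarith
  qed
  have k1: "\<kappa> < 1"
  proof -
    have "\<kappa> \<le> 1 - f 0 / R" unfolding kappa_def using qb s by (intro cSup_least) auto
    moreover have "f 0 / R > 0" using h1a R0 by simp
    ultimately show ?thesis by linarith
  qed
  have gnn: "g t \<ge> 0" if hyp: "t \<in> {0..<R}" for t
  proof (cases "t = 0")
    case True thus ?thesis using h1a by (simp add: g_def)
  next
    case False
    hence t: "t \<in> {0<..<R}" using hyp by auto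
    have "- f t \<le> \<kappa> * t" using kup[OF t] t by (simp add: field_simps)
    thus ?thesis by (simp add: g_def)
  qed
  have gsmall: "\<exists>t\<in>{0<..<R}. g t < e" if hyp: "e > 0" for e
  proof -
    have "\<kappa> - e / R < \<kappa>" using hyp R0 by simp
    hence "\<kappa> - e / R < Sup ((\<lambda>t. - f t / t) ` {0<..<R})" using kappa_def by simp
    hence "\<exists>x\<in>(\<lambda>t. - f t / t) ` {0<..<R}. \<kappa> - e / R < x" using less_cSup_iff[OF _ bddk] s by blast
    then obtain t where t: "t \<in> {0<..<R}" "\<kappa> - e / R < - f t / t" by blast
    have "\<kappa> * t - e / R * t < - f t" using t by (simp add: field_simps)
    moreover have "e / R * t < e" using t hyp R0 by (simp add: field_simps)
    ultimately have "g t < e" unfolding g_def by linarith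
    thus ?thesis using t by blast
  qed
  have ginf: "Inf (g ` {0..<R}) = 0"
  proof (rule cInf_eq_non_empty)
    show "g ` {0..<R} \<noteq> {}" using R0 by auto
    show "\<And>x. x \<in> g ` {0..<R} \<Longrightarrow> 0 \<le> x" using gnn by auto
    fix y assume y: "\<And>x. x \<in> g ` {0..<R} \<Longrightarrow> y \<le> x"
    show "y \<le> 0"
    proof (rule ccontr)
      assume "\<not> y \<le> 0"
      then obtain t where t: "t\<in>{0<..<R}" "g t < y" using gsmall[of y] by auto
      have "y \<le> g t" using y t(1) by auto
      thus False using t(2) by simp
    qed
  qed
  have gmvt: "\<exists>z. a<z \<and> z<b \<and> g b - g a = (b-a) * (f' z + \<kappa>)" if hyp: "0 \<le> a" "a < b" "b < R" for a b
  proof -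
    obtain z where "a<z" "z<b" "f b - f a = (b-a) * f' z" using mvt hyp by blast
    thus ?thesis unfolding g_def by (intro exI[of _ z]) (auto simp: algebra_simps)
  qed
  have S0: "0 \<in> S" using k1 h1b R0 unfolding S_def by auto
  have bddS: "bdd_above S" unfolding S_def by (intro bdd_aboveI[of _ R]) auto
  have lamS: "lam = Sup S" unfolding lam_def S_def ..
  have lamR: "lam \<le> R" unfolding lamS using S0 by (intro cSup_least) (auto simp: S_def)
  have lam0: "lam \<ge> 0" unfolding lamS using S0 bddS by (intro cSup_upper)
  have below: "f' t + \<kappa> < 0" if hyp: "t \<in> {0..<lam}" for t
  proof -
    have "t < Sup S" using hyp lamS by auto
    then obtain u where u: "u \<in> S" "t < u" using less_cSup_iff[OF _ bddS] S0 by blast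
    hence "f' t < f' u" using hyp by (intro mono) (auto simp: S_def)
    thus ?thesis using u by (auto simp: S_def)
  qed
  have above: "f' t + \<kappa> \<ge> 0" if hyp: "t \<in> {0..<R}" "t > lam" for t
  proof (rule ccontr)
    assume "\<not> ?thesis"
    hence "t \<in> S" using hyp by (auto simp: S_def)
    hence "t \<le> lam" unfolding lamS using bddS by (intro cSup_upper)
    thus False using hyp by simp
  qed
  have gdec: "g b < g a" if hyp: "0 \<le> a" "a < b" "b < lam" for a b
  proof -
    obtain z where z: "a<z" "z<b" "g b - g a = (b-a) * (f' z + \<kappa>)" using gmvt[of a b] hyp lamR by auto
    have "f' z + \<kappa> < 0" using below[of z] z hyp by auto
    hence "(b-a) * (f' z + \<kappa>) < 0" using hyp by (simp add: mult_pos_neg)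
    thus ?thesis using z by simp
  qed
  have main: "tstar < lam \<and> ((\<lambda>t. f t + \<kappa> * t) \<longlongrightarrow> 0) (at_left lam)"
  proof (cases "lam < R")
    case True
    have ginc: "g lam \<le> g t" if hyp: "t \<in> {0..<R}" for t
    proof (cases "t < lam")
      case True
      obtain z where z: "t<z" "z<lam" "g lam - g t = (lam-t) * (f' z + \<kappa>)" using gmvt[of t lam] True hyp \<open>lam < R\<close> by auto
      have "f' z + \<kappa> < 0" using below[of z] z hyp by auto
      hence "(lam-t) * (f' z + \<kappa>) < 0" using True by (simp add: mult_pos_neg)
      thus ?thesis using z by simp
    next
      case False
      show ?thesis
      proof (cases "t = lam")
        case False
        hence lt: "lam < t" using \<open>\<not> t < lam\<close> by simp
        obtain z where z: "lam<z" "z<t" "g t - g lam = (t-lam) * (f' z + \<kappa>)" using gmvt[of lam t] lt lam0 hyp by auto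
        have "f' z + \<kappa> \<ge> 0" using above[of z] z hyp lam0 by auto
        hence "(t-lam) * (f' z + \<kappa>) \<ge> 0" using lt by simp
        thus ?thesis using z by simp
      qed simp
    qed
    have "g lam \<le> Inf (g ` {0..<R})" using ginc R0 by (intro cInf_greatest) auto
    hence glam: "g lam = 0" using ginf gnn[of lam] lam0 True by simp
    hence lampos: "lam > 0" using lam0 h1a by (cases "lam = 0") (auto simp: g_def)
    have flam: "f lam < 0" using glam lampos k0 by (simp add: g_def) (smt (verit) mult_pos_pos)
    have "continuous_on {0..lam} f" using fc by (rule continuous_on_subset) (use True in auto)
    from IVT2'[of f lam 0 0, OF _ _ _ this] flam h1a lam0
    obtain z where z: "0 \<le> z" "z \<le> lam" "f z = 0" by auto
    have zl: "z < lam" using z flam by (cases "z = lam") auto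
    have "tstar \<le> z" unfolding tstar_def using z True by (intro cInf_lower) (auto intro: bdd_belowI[of _ 0])
    hence t1: "tstar < lam" using zl by simp
    have "(f has_real_derivative f' lam) (at lam)" using deriv lampos True by (intro fderiv_int[where R=R]) auto
    hence "isCont f lam" by (rule DERIV_isCont)
    hence "isCont g lam" unfolding g_def[abs_def] by (intro continuous_intros)
    hence "(g \<longlongrightarrow> 0) (at lam)" using glam by (simp add: isCont_def)
    hence "(g \<longlongrightarrow> 0) (at_left lam)" by (rule tendsto_mono[rotated]) (simp add: at_le)
    thus ?thesis using t1 unfolding g_def[abs_def] by simp
  next
    case False
    hence lR: "lam = R" using lamR by simp
    have "continuous_on {0..s} f" using fc by (rule continuous_on_subset) (use s in auto)
    from IVT2'[of f s 0 0, OF _ _ _ this] s h1a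
    obtain z where z: "0 \<le> z" "z \<le> s" "f z = 0" by auto
    have "tstar \<le> z" unfolding tstar_def using z s by (intro cInf_lower) (auto intro: bdd_belowI[of _ 0])
    hence t1: "tstar < lam" using z s lR by simp
    have "(g \<longlongrightarrow> 0) (at_left lam)"
    proof (rule tendstoI)
      fix e :: real assume e: "e > 0"
      obtain t0 where t0: "t0 \<in> {0<..<R}" "g t0 < e" using gsmall[OF e] by blast
      have "eventually (\<lambda>x. x \<in> {t0<..<lam}) (at_left lam)" using t0 lR by (intro eventually_at_left_real) auto
      thus "eventually (\<lambda>x. dist (g x) 0 < e) (at_left lam)"
      proof (rule eventually_mono)
        fix x assume x: "x \<in> {t0<..<lam}"
        have "g x < g t0" using gdec[of t0 x] x t0 by auto
        moreover have "g x \<ge> 0" using gnn[of x] x t0 lR by auto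
        ultimately show "dist (g x) 0 < e" using t0 by simp
      qed
    qed
    thus ?thesis using t1 unfolding g_def[abs_def] by simp
  qed
  have T0: "0 \<in> {t \<in> {0..<R}. f' t < 0}" using h1b R0 by auto
  have bddT: "bdd_above {t \<in> {0..<R}. f' t < 0}" by (intro bdd_aboveI[of _ R]) auto
  have l2: "lam \<le> tbar" unfolding lamS tbar_def using S0 bddT k0
    by (intro cSup_subset_mono) (auto simp: S_def)
  have bddU: "bdd_above {t \<in> {0..<R}. f t < 0}" by (intro bdd_aboveI[of _ R]) auto
  have sU: "s \<le> taubar" unfolding taubar_def using s bddU by (intro cSup_upper) auto
  have l3: "tbar \<le> taubar" unfolding tbar_def
  proof (rule cSup_least)
    show "{t \<in> {0..<R}. f' t < 0} \<noteq> {}" using T0 by blast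
    fix x assume x: "x \<in> {t \<in> {0..<R}. f' t < 0}"
    show "x \<le> taubar"
    proof (cases "x \<le> s")
      case True thus ?thesis using sU by simp
    next
      case False
      obtain z where z: "s<z" "z<x" "f x - f s = (x-s) * f' z" using mvt[of s x] False s x by auto
      have "f' z < f' x" using z x s by (intro mono) auto
      hence "(x-s) * f' z < 0" using x False by (intro mult_pos_neg) auto
      hence "f x < 0" using z s by simp
      hence "x \<in> {t \<in> {0..<R}. f t < 0}" using x by auto
      thus ?thesis unfolding taubar_def using bddU by (intro cSup_upper)
    qed
  qed
  have th: "0 < \<Theta> \<and> \<Theta> < 1" unfolding Theta_def using k0 k1 by (auto simp: field_simps)
  have "Inf ((\<lambda>t. f t + \<kappa> * t) ` {0..<R}) = 0" using ginf unfolding g_def[abs_def] by simp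
  thus ?thesis using k0 k1 th main l2 l3 below by auto
qed

end
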